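(* Let $\{c_n\}_{n\in\mathbb Z}$ be complex numbers with $\{c_n\}_{n\ge0}\in NBVS$ and $\{c_n+c_{-n}\}_{n\ge0}\in NBVS$, and suppose $f(x)=\lim_{N\to\infty}\sum_{n=-N}^Nc_ne^{inx}$ exists for all $x$ and $f\in C_{2\pi}$. Then there is a constant $K$, depending only on these sequences, such that for all $m\ge1$ and all $x\in[0,\pi]$, $$\Big|\sum_{k=m}^\infty c_k\sin kx\Big|\le K\max_{k\ge m}k\big(|c_k|+|c_{-k}|\big)\quad\text{and}\quad\Big|\sum_{k=m}^\infty c_{-k}\sin kx\Big|\le K\max_{k\ge m}k\big(|c_k|+|c_{-k}|\big).$$
   Context: For $\theta_0\in[0,\pi/2)$ let $M(\theta_0)=\{z\in\mathbb C: |\arg z|\le\theta_0\}$ (with $0\in M(\theta_0)$). Write $\Delta c_n=c_n-c_{n+1}$. A complex sequence $\mathbf C=\{c_n\}$ belongs to $NBVS$ if there is $\theta_0\in[0,\pi/2)$ with $c_n\in M(\theta_0)$ for all $n\ge1$ and a constant $K(\mathbf C)>0$ such that $\sum_{n=m}^{2m}|\Delta c_n|\le K(\mathbf C)\big(|c_m|+|c_{2m}|\big)$ for all $m\ge1$. $C_{2\pi}$ denotes the continuous $2\pi$-periodic complex functions. *)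

theory Defs
  imports "HOL-Analysis.Analysis"
begin

definition sector :: "real \<Rightarrow> complex set" where
  "sector \<theta>0 = {z. z = 0 \<or> \<bar>Arg z\<bar> \<le> \<theta>0}"

text \<open>NBVS for a sequence indexed by naturals; conditions are imposed for n >= 1, m >= 1
  as in the definition; Delta c_n = c_n - c_(n+1).\<close>
definition NBVS :: "(nat \<Rightarrow> complex) \<Rightarrow> bool" where
  "NBVS c \<longleftrightarrow>
     (\<exists>\<theta>0. 0 \<le> \<theta>0 \<and> \<theta>0 < pi / 2 \<and> (\<forall>n\<ge>1. c n \<in> sector \<theta>0)) \<and>
     (\<exists>K>0. \<forall>m\<ge>1. (\<Sum>n=m..2*m. norm (c n - c (n + 1))) \<le> K * (norm (c m) + norm (c (2*m))))"

definition C2pi :: "(real \<Rightarrow> complex) set" where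
  "C2pi = {f. continuous_on UNIV f \<and> (\<forall>x. f (x + 2 * pi) = f x)}"

end

theory Submission imports Defs begin

lemma sin_half_lower:
  fixes y :: real assumes "0 \<le> y" "y \<le> pi/2"
  shows "y / 3 \<le> sin y"
proof -
  have b: "\<bar>sin y - y\<bar> \<le> y^3 / 6"
    using Maclaurin_sin_bound[of y 3] assms
    by (simp add: numeral_3_eq_3 sin_coeff_def fact_numeral)
  have "y \<le> 2" using assms pi_less_4 by linarith
  then have "y^2 \<le> 4" using assms by (metis power2_eq_square mult_mono' numeral_Bit0 mult_2 order_refl abs_of_nonneg zero_le_numeral power2_abs power_mono)
  then have "y^3 / 6 \<le> y * 4 / 6" using assms
    using mult_left_mono[of "y*y" 4 y] by (simp add: power3_eq_cube power2_eq_square)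
  then show ?thesis using b unfolding abs_le_iff by linarith
qed

lemma B_nonneg:
  fixes a :: "nat \<Rightarrow> complex"
  assumes "\<forall>k\<ge>m. real k * norm (a k) \<le> B"
  shows "0 \<le> B"
proof -
  have "0 \<le> real m * norm (a m)" by simp
  also have "\<dots> \<le> B" using assms by simp
  finally show ?thesis .
qed

lemma abel_id:
  fixes a :: "nat \<Rightarrow> complex" and u :: "nat \<Rightarrow> real"
  assumes "p \<le> q"
  shows "(\<Sum>k=p..<q. a k * of_real (u k - u (k+1))) =
     a p * of_real (u p) - a q * of_real (u q) + (\<Sum>k=p..<q. (a (k+1) - a k) * of_real (u (k+1)))"
  using assms
proof (induction q)
  case 0 then show ?case by simp
next
  case (Suc q)
  show ?case
  proof (cases "p = Suc q")
    case True then show ?thesis by simp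
  next
    case False
    then have "p \<le> q" using Suc by simp
    then show ?thesis using Suc by (simp add: algebra_simps)
  qed
qed

lemma sin_tele:
  fixes x :: real assumes "sin (x/2) \<noteq> 0"
  shows "sin (real k * x) = cos ((real k - 1/2) * x) / (2 * sin (x/2)) - cos ((real (k+1) - 1/2) * x) / (2 * sin (x/2))"
proof -
  have "cos (real k * x - x/2) - cos (real k * x + x/2) = 2 * sin (real k * x) * sin (x/2)"
    by (simp add: cos_diff cos_add)
  moreover have "(real k - 1/2) * x = real k * x - x/2" "(real (k+1) - 1/2) * x = real k * x + x/2"
    by (simp_all add: algebra_simps)
  ultimately show ?thesis using assms by (simp add: field_simps)
qed

lemma var_dyadic:
  fixes a :: "nat \<Rightarrow> complex"
  assumes H: "\<forall>n\<ge>1. (\<Sum>j=n..2*n. norm (a j - a (j+1))) \<le> K*(norm(a n)+norm(a(2*n)))"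
    and K: "K \<ge> 0"
    and B: "\<forall>k\<ge>m. real k * norm (a k) \<le> B" and N: "m \<le> N" "1 \<le> N"
  shows "(\<Sum>j=N..<2^J*N. norm (a j - a (j+1))) \<le> 3*K*B/N * (1 - 1/2^J)"
proof (induction J)
  case 0 then show ?case by simp
next
  case (Suc J)
  define n where "n = 2^J*N"
  have "N \<le> n" unfolding n_def by (simp add: mult_le_cancel2 Suc_leI)
  then have n1: "1 \<le> n" "m \<le> n" "N \<le> n" using N by auto
  have an: "norm (a n) \<le> B / n" using B n1 by (auto simp: field_simps mult.commute)
  have a2n: "norm (a (2*n)) \<le> B / (2*n)" using B[rule_format, of "2*n"] n1 by (auto simp: field_simps mult.commute)
  have blk: "(\<Sum>j=n..2*n. norm (a j - a (j+1))) \<le> 3*K*B/(2*n)"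
  proof -
    have "(\<Sum>j=n..2*n. norm (a j - a (j+1))) \<le> K*(norm(a n)+norm(a(2*n)))" using H n1 by auto
    also have "\<dots> \<le> K*(B/n + B/(2*n))" using an a2n K by (intro mult_left_mono) auto
    also have "\<dots> = 3*K*B/(2*n)" using n1 by (simp add: field_simps)
    finally show ?thesis .
  qed
  have "(\<Sum>j=n..<2*n. norm (a j - a (j+1))) \<le> (\<Sum>j=n..2*n. norm (a j - a (j+1)))"
    by (intro sum_mono2) auto
  have split: "(\<Sum>j=N..<2^Suc J*N. norm (a j - a (j+1))) = (\<Sum>j=N..<n. norm (a j - a (j+1))) + (\<Sum>j=n..<2*n. norm (a j - a (j+1)))"
    using n1 by (simp add: n_def sum.atLeastLessThan_concat mult.assoc)
  have "(\<Sum>j=N..<2^Suc J*N. norm (a j - a (j+1))) \<le> 3*K*B/N * (1 - 1/2^J) + 3*K*B/(2*n)"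
    using split Suc.IH blk \<open>(\<Sum>j=n..<2*n. norm (a j - a (j+1))) \<le> _\<close> by (simp add: n_def)
  also have "\<dots> = 3*K*B/N * (1 - 1/2^Suc J)" using N by (simp add: n_def field_simps)
  finally show ?case .
qed

lemma var_tail:
  fixes a :: "nat \<Rightarrow> complex"
  assumes H: "\<forall>n\<ge>1. (\<Sum>j=n..2*n. norm (a j - a (j+1))) \<le> K*(norm(a n)+norm(a(2*n)))"
    and K: "K \<ge> 0"
    and B: "\<forall>k\<ge>m. real k * norm (a k) \<le> B" and N: "m \<le> N" "1 \<le> N"
  shows "(\<Sum>j=N..<q. norm (a j - a (j+1))) \<le> 3*K*B/N"
proof -
  have B0: "0 \<le> B" by (rule B_nonneg[OF B])
  have "q \<le> 2^q*N" using N by (metis less_exp less_imp_le_nat mult_le_mono1 mult_1_right order_trans mult.commute mult_le_mono2)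
  then have "(\<Sum>j=N..<q. norm (a j - a (j+1))) \<le> (\<Sum>j=N..<2^q*N. norm (a j - a (j+1)))"
    by (intro sum_mono2) auto
  also have "\<dots> \<le> 3*K*B/N * (1 - 1/2^q)" by (rule var_dyadic[OF H K B N])
  also have "\<dots> \<le> 3*K*B/N" using K B0 N by (intro mult_left_le) auto
  finally show ?thesis .
qed

lemma block_sum:
  fixes a :: "nat \<Rightarrow> complex"
  assumes H: "\<forall>n\<ge>1. (\<Sum>j=n..2*n. norm (a j - a (j+1))) \<le> K*(norm(a n)+norm(a(2*n)))"
    and K: "K \<ge> 0"
    and B: "\<forall>k\<ge>m. real k * norm (a k) \<le> B" and p: "m \<le> p" "1 \<le> p"
    and x: "0 < x" "x \<le> pi"
  shows "norm (\<Sum>k=p..<q. a k * of_real (sin (real k * x))) \<le> (3/x) * (2 + 3*K) * B / p"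
proof (cases "q \<le> p")
  case True
  have B0: "0 \<le> B" by (rule B_nonneg[OF B])
  then show ?thesis using True x K by simp
next
  case False
  then have pq: "p \<le> q" by simp
  define s where "s = sin (x/2)"
  have s: "x/6 \<le> s" using sin_half_lower[of "x/2"] x by (simp add: s_def)
  have s0: "0 < s" using s x by simp
  define u where "u k = cos ((real k - 1/2) * x) / (2 * s)" for k :: nat
  have uk: "\<bar>u k\<bar> \<le> 3/x" for k
  proof -
    have "abs (u k) \<le> 1 / (2 * s)" using s0 by (simp add: u_def abs_divide divide_right_mono)
    also have "\<dots> \<le> 3/x" using s x s0 by (simp add: field_simps)
    finally show ?thesis .
  qed
  have eq1: "(\<Sum>k=p..<q. a k * of_real (sin (real k * x))) = (\<Sum>k=p..<q. a k * of_real (u k - u (k+1)))"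
    using sin_tele[of x] s0 by (simp add: u_def s_def)
  note eq = eq1 abel_id[OF pq, of a u]
  have "norm (a p * of_real (u p) - a q * of_real (u q) + (\<Sum>k=p..<q. (a (k+1) - a k) * of_real (u (k+1))))
     \<le> norm (a p) * \<bar>u p\<bar> + norm (a q) * \<bar>u q\<bar> + (\<Sum>k=p..<q. norm (a k - a (k+1)) * \<bar>u (k+1)\<bar>)"
  proof -
    have "norm (\<Sum>k=p..<q. (a (k+1) - a k) * of_real (u (k+1))) \<le> (\<Sum>k=p..<q. norm ((a (k+1) - a k) * of_real (u (k+1))))"
      by (rule norm_sum)
    also have "\<dots> = (\<Sum>k=p..<q. norm (a k - a (k+1)) * \<bar>u (k+1)\<bar>)"
      by (simp add: norm_mult norm_minus_commute)
    finally have sb: "norm (\<Sum>k=p..<q. (a (k+1) - a k) * of_real (u (k+1))) \<le> (\<Sum>k=p..<q. norm (a k - a (k+1)) * \<bar>u (k+1)\<bar>)" .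
    have t1: "norm (a p * of_real (u p)) = norm (a p) * \<bar>u p\<bar>" by (simp add: norm_mult)
    have t2: "norm (a q * of_real (u q)) = norm (a q) * \<bar>u q\<bar>" by (simp add: norm_mult)
    show ?thesis
      using norm_triangle_ineq[of "a p * of_real (u p) - a q * of_real (u q)" "\<Sum>k=p..<q. (a (k+1) - a k) * of_real (u (k+1))"]
        norm_triangle_ineq4[of "a p * of_real (u p)" "a q * of_real (u q)"] t1 t2 sb by linarith
  qed
  also have "\<dots> \<le> norm (a p) * (3/x) + norm (a q) * (3/x) + (\<Sum>k=p..<q. norm (a k - a (k+1)) * (3/x))"
    by (intro add_mono mult_left_mono sum_mono uk) auto
  also have "\<dots> = (3/x) * (norm (a p) + norm (a q) + (\<Sum>k=p..<q. norm (a k - a (k+1))))"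
    by (simp only: sum_distrib_right[symmetric]) (simp add: algebra_simps)
  also have "\<dots> \<le> (3/x) * (B/p + B/p + 3*K*B/p)"
  proof -
    have "norm (a p) \<le> B/p" using B p by (auto simp: field_simps mult.commute)
    moreover have "norm (a q) \<le> B/q" using B p pq by (auto simp: field_simps mult.commute)
    moreover have "B/q \<le> B/p" using p pq B_nonneg[OF B]
      by (intro divide_left_mono) auto
    moreover have "(\<Sum>k=p..<q. norm (a k - a (k+1))) \<le> 3*K*B/p" by (rule var_tail[OF H K B p])
    ultimately show ?thesis using x by (intro mult_left_mono) auto
  qed
  also have "\<dots> = (3/x) * (2 + 3*K) * B / p" using p x by (simp add: field_simps)
  finally show ?thesis using eq by simp
qed

lemma first_part:
  fixes a :: "nat \<Rightarrow> complex"
  assumes B: "\<forall>k\<ge>m. real k * norm (a k) \<le> B" and m: "1 \<le> m"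
    and x: "0 < x" and q: "q \<le> max m (nat \<lceil>1/x\<rceil>)"
  shows "norm (\<Sum>k=m..<q. a k * of_real (sin (real k * x))) \<le> B"
proof -
  have B0: "0 \<le> B" by (rule B_nonneg[OF B])
  have t: "norm (a k * of_real (sin (real k * x))) \<le> B * x" if "k \<in> {m..<q}" for k
  proof -
    have "norm (a k * of_real (sin (real k * x))) = norm (a k) * \<bar>sin (real k * x)\<bar>" by (simp add: norm_mult)
    also have "\<dots> \<le> norm (a k) * (real k * x)"
      using abs_sin_x_le_abs_x[of "real k * x"] x by (intro mult_left_mono) auto
    also have "\<dots> = (real k * norm (a k)) * x" by simp
    also have "\<dots> \<le> B * x" using B that x by (intro mult_right_mono) auto
    finally show ?thesis .
  qed
  have "norm (\<Sum>k=m..<q. a k * of_real (sin (real k * x))) \<le> (\<Sum>k=m..<q. norm (a k * of_real (sin (real k * x))))"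
    by (rule norm_sum)
  also have "\<dots> \<le> (\<Sum>k=m..<q. B * x)" by (intro sum_mono t)
  also have "\<dots> = B * (real (q - m) * x)" by simp
  also have "\<dots> \<le> B * 1"
  proof -
    have "real (q - m) * x \<le> 1"
    proof (cases "q \<le> m")
      case True then show ?thesis by simp
    next
      case False
      define M where "M = nat \<lceil>1/x\<rceil>"
      have qM: "q \<le> M" using q False by (simp add: M_def max_def split: if_splits)
      have "q - m \<le> M - 1" using qM m False by linarith
      then have "real (q - m) \<le> real (M - 1)" by (simp only: of_nat_le_iff)
      also have "real (M - 1) = real M - 1" using qM m False by (simp add: of_nat_diff)
      also have "real M - 1 = of_int \<lceil>1/x\<rceil> - 1" unfolding M_def using x by simp
      also have "of_int \<lceil>1/x\<rceil> - 1 \<le> 1/x" using of_int_ceiling_le_add_one[of "1/x"] by linarith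
      finally have "real (q - m) \<le> 1/x" .
      then show ?thesis using x by (simp add: field_simps)
    qed
    then show ?thesis using B0 by (intro mult_left_mono) auto
  qed
  finally show ?thesis by simp
qed

lemma partial_bound:
  fixes a :: "nat \<Rightarrow> complex"
  assumes H: "\<forall>n\<ge>1. (\<Sum>j=n..2*n. norm (a j - a (j+1))) \<le> K*(norm(a n)+norm(a(2*n)))"
    and K: "K \<ge> 0"
    and B: "\<forall>k\<ge>m. real k * norm (a k) \<le> B" and m: "1 \<le> m"
    and x: "0 < x" "x \<le> pi"
  shows "norm (\<Sum>k=m..<q. a k * of_real (sin (real k * x))) \<le> (1 + 3*(2+3*K)) * B"
proof -
  have B0: "0 \<le> B" by (rule B_nonneg[OF B])
  define N where "N = max m (nat \<lceil>1/x\<rceil>)"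
  have N1: "m \<le> N" by (simp add: N_def)
  have N2: "1 \<le> N" using m N1 by linarith
  have "nat \<lceil>1/x\<rceil> \<le> N" by (simp add: N_def)
  then have "real (nat \<lceil>1/x\<rceil>) \<le> real N" by (simp only: of_nat_le_iff)
  then have N3: "1/x \<le> real N" using real_nat_ceiling_ge[of "1/x"] by linarith
  have C0: "0 \<le> (1 + 3*(2+3*K)) * B" using B0 K by simp
  show ?thesis
  proof (cases "q \<le> N")
    case True
    have "norm (\<Sum>k=m..<q. a k * of_real (sin (real k * x))) \<le> B"
      by (rule first_part[OF B m x(1)]) (use True in \<open>simp add: N_def\<close>)
    also have "\<dots> \<le> (1 + 3*(2+3*K)) * B" using mult_right_mono[of 1 "1 + 3*(2+3*K)" B] B0 K by simp
    finally show ?thesis .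
  next
    case False
    have sp: "(\<Sum>k=m..<q. a k * of_real (sin (real k * x))) = (\<Sum>k=m..<N. a k * of_real (sin (real k * x))) + (\<Sum>k=N..<q. a k * of_real (sin (real k * x)))"
      using N1 False by (simp add: sum.atLeastLessThan_concat)
    have f1: "norm (\<Sum>k=m..<N. a k * of_real (sin (real k * x))) \<le> B"
      by (rule first_part[OF B m x(1)]) (simp add: N_def)
    have f2: "norm (\<Sum>k=N..<q. a k * of_real (sin (real k * x))) \<le> (3/x) * (2 + 3*K) * B / N"
      by (rule block_sum[OF H K B N1 N2 x])
    have f3: "(3/x) * (2 + 3*K) * B / N \<le> 3 * (2 + 3*K) * B"
    proof -
      have "1 / (x * N) \<le> 1" using N3 N2 x by (simp add: field_simps)
      then have "(3 * (2 + 3*K) * B) * (1 / (x * N)) \<le> (3 * (2 + 3*K) * B) * 1"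
        using B0 K by (intro mult_left_mono) auto
      then show ?thesis by (simp add: field_simps)
    qed
    have "norm (\<Sum>k=m..<q. a k * of_real (sin (real k * x))) \<le> norm (\<Sum>k=m..<N. a k * of_real (sin (real k * x))) + norm (\<Sum>k=N..<q. a k * of_real (sin (real k * x)))"
      unfolding sp by (rule norm_triangle_ineq)
    also have "\<dots> \<le> B + 3 * (2 + 3*K) * B" using f1 f2 f3 by linarith
    also have "\<dots> = (1 + 3*(2+3*K)) * B" by (simp add: algebra_simps)
    finally show ?thesis .
  qed
qed

lemma main_bound:
  fixes a :: "nat \<Rightarrow> complex"
  assumes H: "\<forall>n\<ge>1. (\<Sum>j=n..2*n. norm (a j - a (j+1))) \<le> K*(norm(a n)+norm(a(2*n)))"
    and K: "K \<ge> 0"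
    and B: "\<forall>k\<ge>m. real k * norm (a k) \<le> B" and m: "1 \<le> m"
    and x: "0 \<le> x" "x \<le> pi"
  shows "summable (\<lambda>k. a (k+m) * of_real (sin (real (k+m) * x))) \<and>
         norm (\<Sum>k. a (k+m) * of_real (sin (real (k+m) * x))) \<le> (1 + 3*(2+3*K)) * B"
proof -
  have B0: "0 \<le> B" by (rule B_nonneg[OF B])
  show ?thesis
  proof (cases "x = 0")
    case True
    then show ?thesis using B0 K by simp
  next
    case False
    then have x0: "0 < x" using x by simp
    define g where "g k = a k * of_real (sin (real k * x))" for k
    have sh: "(\<Sum>k=p..<q. g (k+m)) = (\<Sum>k=p+m..<q+m. g k)" for p q
      by (rule sum.shift_bounds_nat_ivl[symmetric])
    have summ: "summable (\<lambda>k. g (k+m))"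
      unfolding summable_Cauchy
    proof (intro allI impI)
      fix e :: real assume e: "0 < e"
      define D where "D = (3/x) * (2 + 3*K) * B"
      have D0: "0 \<le> D" unfolding D_def using B0 K x0 by (intro mult_nonneg_nonneg) auto
      obtain n :: nat where n: "D / e < real n" using reals_Archimedean2 by blast
      define P where "P = max 1 n"
      have P1: "1 \<le> P" by (simp add: P_def)
      have P2: "D / e < real P" using n by (simp add: P_def)
      have DP: "D / real P < e" using P1 P2 e by (simp add: field_simps)
      show "\<exists>N. \<forall>p\<ge>N. \<forall>q. norm (\<Sum>k=p..<q. g (k+m)) < e"
      proof (intro exI allI impI)
        fix p q assume p: "P \<le> p"
        have pm1: "m \<le> p + m" "1 \<le> p + m" using m by auto
        have "norm (\<Sum>k=p..<q. g (k+m)) = norm (\<Sum>k=p+m..<q+m. g k)" by (simp only: sh)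
        also have "\<dots> \<le> D / real (p+m)" unfolding g_def D_def
          by (rule block_sum[OF H K B pm1 x0 x(2)])
        also have "\<dots> \<le> D / real P" using D0 P1 p by (intro divide_left_mono) auto
        also have "\<dots> < e" by (rule DP)
        finally show "norm (\<Sum>k=p..<q. g (k+m)) < e" .
      qed
    qed
    have "norm (\<Sum>k. g (k+m)) \<le> (1 + 3*(2+3*K)) * B"
    proof (rule LIMSEQ_le_const2)
      show "(\<lambda>n. norm (\<Sum>k<n. g (k+m))) \<longlonglongrightarrow> norm (\<Sum>k. g (k+m))"
        by (intro tendsto_norm summable_LIMSEQ summ)
      show "\<exists>N. \<forall>n\<ge>N. norm (\<Sum>k<n. g (k+m)) \<le> (1 + 3*(2+3*K)) * B"
      proof (intro exI allI impI)
        fix n :: nat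
        have "(\<Sum>k<n. g (k+m)) = (\<Sum>k=0..<n. g (k+m))" by (simp only: atLeast0LessThan)
        also have "\<dots> = (\<Sum>k=0+m..<n+m. g k)" by (rule sh)
        finally have e: "(\<Sum>k<n. g (k+m)) = (\<Sum>k=m..<n+m. g k)" by simp
        show "norm (\<Sum>k<n. g (k+m)) \<le> (1 + 3*(2+3*K)) * B"
          unfolding e unfolding g_def by (rule partial_bound[OF H K B m x0 x(2)])
      qed
    qed
    then show ?thesis using summ unfolding g_def by simp
  qed
qed

theorem lemma6:
  fixes c :: "int \<Rightarrow> complex" and f :: "real \<Rightarrow> complex"
  assumes "NBVS (\<lambda>n. c (int n))"
    and "NBVS (\<lambda>n. c (int n) + c (- int n))"
    and "\<And>x. (\<lambda>N. \<Sum>n=-int N..int N. c n * exp (\<i> * of_int n * of_real x)) \<longlonglongrightarrow> f x"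
    and "f \<in> C2pi"
  shows "\<exists>K::real. \<forall>m::nat\<ge>1. \<forall>x\<in>{0..pi}.
           bdd_above ((\<lambda>k. real k * (norm (c (int k)) + norm (c (- int k)))) ` {m..}) \<longrightarrow>
           (summable (\<lambda>k. c (int (k + m)) * of_real (sin (real (k + m) * x))) \<and>
            norm (\<Sum>k. c (int (k + m)) * of_real (sin (real (k + m) * x)))
              \<le> K * (SUP k\<in>{m..}. real k * (norm (c (int k)) + norm (c (- int k)))) \<and>
            summable (\<lambda>k. c (- int (k + m)) * of_real (sin (real (k + m) * x))) \<and>
            norm (\<Sum>k. c (- int (k + m)) * of_real (sin (real (k + m) * x)))
              \<le> K * (SUP k\<in>{m..}. real k * (norm (c (int k)) + norm (c (- int k)))))"
proof -
  obtain K1 where K1: "K1 > 0" and H1: "\<forall>n\<ge>1. (\<Sum>j=n..2*n. norm (c (int j) - c (int (j+1)))) \<le> K1*(norm (c (int n)) + norm (c (int (2*n))))"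
    using assms(1) unfolding NBVS_def by blast
  obtain K2 where K2: "K2 > 0" and H2: "\<forall>n\<ge>1. (\<Sum>j=n..2*n. norm ((c (int j) + c (- int j)) - (c (int (j+1)) + c (- int (j+1))))) \<le> K2*(norm (c (int n) + c (- int n)) + norm (c (int (2*n)) + c (- int (2*n))))"
    using assms(2) unfolding NBVS_def by blast
  have K1': "K1 \<ge> 0" and K2': "K2 \<ge> 0" using K1 K2 by auto
  have C2: "1 + 3*(2+3*K2) \<ge> 0" using K2 by simp
  show ?thesis
  proof (intro exI[of _ "(1 + 3*(2+3*K1)) + (1 + 3*(2+3*K2))"] allI impI ballI)
    fix m :: nat and x :: real
    assume m: "1 \<le> m" and x: "x \<in> {0..pi}"
      and bdd: "bdd_above ((\<lambda>k. real k * (norm (c (int k)) + norm (c (- int k)))) ` {m..})"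
    define B where "B = (SUP k\<in>{m..}. real k * (norm (c (int k)) + norm (c (- int k))))"
    have Bk: "real k * (norm (c (int k)) + norm (c (- int k))) \<le> B" if "k \<ge> m" for k
      unfolding B_def using bdd that by (intro cSUP_upper) auto
    have "0 \<le> real m * (norm (c (int m)) + norm (c (- int m)))" by simp
    then have B0: "0 \<le> B" using Bk[of m] by linarith
    have Ba: "\<forall>k\<ge>m. real k * norm (c (int k)) \<le> B"
    proof (intro allI impI)
      fix k assume "m \<le> k"
      have "real k * norm (c (int k)) \<le> real k * (norm (c (int k)) + norm (c (- int k)))"
        by (intro mult_left_mono) auto
      then show "real k * norm (c (int k)) \<le> B" using Bk[OF \<open>m \<le> k\<close>] by linarith
    qed
    have Bd: "\<forall>k\<ge>m. real k * norm (c (int k) + c (- int k)) \<le> B"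
    proof (intro allI impI)
      fix k assume "m \<le> k"
      have "real k * norm (c (int k) + c (- int k)) \<le> real k * (norm (c (int k)) + norm (c (- int k)))"
        by (intro mult_left_mono norm_triangle_ineq) auto
      then show "real k * norm (c (int k) + c (- int k)) \<le> B" using Bk[OF \<open>m \<le> k\<close>] by linarith
    qed
    have x1: "0 \<le> x" "x \<le> pi" using x by auto
    have RA: "summable (\<lambda>k. c (int (k + m)) * of_real (sin (real (k + m) * x))) \<and>
         norm (\<Sum>k. c (int (k + m)) * of_real (sin (real (k + m) * x))) \<le> (1 + 3*(2+3*K1)) * B"
      by (rule main_bound[of "\<lambda>n. c (int n)" K1 m B x, OF H1 K1' Ba m x1])
    have RD: "summable (\<lambda>k. (c (int (k + m)) + c (- int (k + m))) * of_real (sin (real (k + m) * x))) \<and>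
         norm (\<Sum>k. (c (int (k + m)) + c (- int (k + m))) * of_real (sin (real (k + m) * x))) \<le> (1 + 3*(2+3*K2)) * B"
      by (rule main_bound[of "\<lambda>n. c (int n) + c (- int n)" K2 m B x, OF H2 K2' Bd m x1])
    have eqf: "(\<lambda>k. c (- int (k + m)) * of_real (sin (real (k + m) * x))) =
      (\<lambda>k. (c (int (k + m)) + c (- int (k + m))) * of_real (sin (real (k + m) * x)) - c (int (k + m)) * of_real (sin (real (k + m) * x)))"
      by (simp add: algebra_simps)
    have sN: "summable (\<lambda>k. c (- int (k + m)) * of_real (sin (real (k + m) * x)))"
      unfolding eqf using RA RD by (intro summable_diff) auto
    have sd: "(\<Sum>k. c (- int (k + m)) * of_real (sin (real (k + m) * x))) =
       (\<Sum>k. (c (int (k + m)) + c (- int (k + m))) * of_real (sin (real (k + m) * x))) - (\<Sum>k. c (int (k + m)) * of_real (sin (real (k + m) * x)))"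
      unfolding eqf using RA RD by (intro suminf_diff[symmetric]) auto
    have "norm (\<Sum>k. c (- int (k + m)) * of_real (sin (real (k + m) * x))) \<le>
       norm (\<Sum>k. (c (int (k + m)) + c (- int (k + m))) * of_real (sin (real (k + m) * x))) + norm (\<Sum>k. c (int (k + m)) * of_real (sin (real (k + m) * x)))"
      unfolding sd by (rule norm_triangle_ineq4)
    then have "norm (\<Sum>k. c (- int (k + m)) * of_real (sin (real (k + m) * x))) \<le> (1 + 3*(2+3*K2)) * B + (1 + 3*(2+3*K1)) * B"
      using RA RD by linarith
    then have nN: "norm (\<Sum>k. c (- int (k + m)) * of_real (sin (real (k + m) * x))) \<le> ((1 + 3*(2+3*K1)) + (1 + 3*(2+3*K2))) * B"
      by (simp add: algebra_simps)
    have "(1 + 3*(2+3*K1)) * B \<le> ((1 + 3*(2+3*K1)) + (1 + 3*(2+3*K2))) * B" using C2 B0 by (intro mult_right_mono) auto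
    then have nA: "norm (\<Sum>k. c (int (k + m)) * of_real (sin (real (k + m) * x))) \<le> ((1 + 3*(2+3*K1)) + (1 + 3*(2+3*K2))) * B"
      using RA by linarith
    have fin: "summable (\<lambda>k. c (int (k + m)) * of_real (sin (real (k + m) * x))) \<and>
            norm (\<Sum>k. c (int (k + m)) * of_real (sin (real (k + m) * x)))
              \<le> ((1 + 3*(2+3*K1)) + (1 + 3*(2+3*K2))) * B \<and>
            summable (\<lambda>k. c (- int (k + m)) * of_real (sin (real (k + m) * x))) \<and>
            norm (\<Sum>k. c (- int (k + m)) * of_real (sin (real (k + m) * x)))
              \<le> ((1 + 3*(2+3*K1)) + (1 + 3*(2+3*K2))) * B"
      by (intro conjI conjunct1[OF RA] sN nN nA)
    then show "summable (\<lambda>k. c (int (k + m)) * of_real (sin (real (k + m) * x))) \<and>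
            norm (\<Sum>k. c (int (k + m)) * of_real (sin (real (k + m) * x)))
              \<le> ((1 + 3*(2+3*K1)) + (1 + 3*(2+3*K2))) * (SUP k\<in>{m..}. real k * (norm (c (int k)) + norm (c (- int k)))) \<and>
            summable (\<lambda>k. c (- int (k + m)) * of_real (sin (real (k + m) * x))) \<and>
            norm (\<Sum>k. c (- int (k + m)) * of_real (sin (real (k + m) * x)))
              \<le> ((1 + 3*(2+3*K1)) + (1 + 3*(2+3*K2))) * (SUP k\<in>{m..}. real k * (norm (c (int k)) + norm (c (- int k))))"
      unfolding B_def .
  qed
qed

end
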